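(* For any $T\in\mathbb{N}$ and $n,m\in\mathbb{N}_+$ there exist a constant $C(n)$ depending only on $n$, reals $\alpha_1,\dots,\alpha_m$ and $\beta_1,\dots,\beta_m>0$ such that, with $\phi(t;B)=\sum_{k=1}^m\alpha_ke^{-\beta_k(t-B)}$, $$\max_{1\le B\le T}\ \sum_{t=0}^\infty\big|\mathbb{I}\{t=B\}-\phi(t;B)\big|\le\frac{C(n)e^{0.01(n+1)T}}{m^n},$$ where the maximum is over integers $B$.
   Context: $\mathbb{I}\{\cdot\}$ denotes the indicator function. *)

theory Defs
  imports Complex_Main
begin

definition phi :: "nat \<Rightarrow> (nat \<Rightarrow> real) \<Rightarrow> (nat \<Rightarrow> real) \<Rightarrow> nat \<Rightarrow> nat \<Rightarrow> real" where
  "phi m \<alpha> \<beta> B t = (\<Sum>k=1..m. \<alpha> k * exp (- \<beta> k * (real t - real B)))"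

end

theory Submission imports Defs begin

definition hs :: "nat \<Rightarrow> (nat \<Rightarrow> real) \<Rightarrow> (nat \<Rightarrow> real) \<Rightarrow> nat \<Rightarrow> real" where
  "hs N c x u = (\<Sum>j<N. c j * x j ^ u)"

definition ed :: "nat \<Rightarrow> nat \<Rightarrow> (nat \<Rightarrow> real) \<Rightarrow> (nat \<Rightarrow> real) \<Rightarrow> nat \<Rightarrow> real" where
  "ed T N c x u = \<bar>(if u = T then 1 else 0) - hs N c x u\<bar>"

lemma small_y:
  fixes K e :: real assumes "e > 0" "K \<ge> 0"
  shows "\<exists>y. 0 < y \<and> y < 1 \<and> K * (y / (1 - y)) \<le> e"
proof -
  define d where "d = e / (K + 1)"
  have d: "d > 0" using assms by (simp add: d_def)
  define y where "y = d / (1 + d)"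
  have y1: "0 < y" "y < 1" using d by (auto simp: y_def field_simps)
  have "y / (1 - y) = d" using d by (simp add: y_def field_simps)
  moreover have "K * d \<le> e" using assms by (simp add: d_def field_simps)
  ultimately show ?thesis using y1 by auto
qed

lemma geo_suc: fixes y :: real assumes "0 < y" "y < 1" shows "(\<lambda>u. y ^ Suc u) sums (y / (1 - y))"
proof -
  have "(\<lambda>u. y * y ^ u) sums (y * (1 / (1 - y)))"
    using sums_mult[OF geometric_sums, of y y] assms by simp
  then show ?thesis by simp
qed

lemma core:
  fixes e :: real
  assumes "e > 0"
  shows "\<exists>c x. (\<forall>j. 0 < x j \<and> x j < 1) \<and> (\<forall>j\<ge>Suc T. c j = 0) \<and>
     summable (ed T (Suc T) c x) \<and> suminf (ed T (Suc T) c x) \<le> e"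
  using assms
proof (induction T arbitrary: e)
  case 0
  obtain y where y: "0 < y" "y < 1" "1 * (y / (1 - y)) \<le> e" using small_y[of e 1] 0 by auto
  define c :: "nat \<Rightarrow> real" where "c = (\<lambda>j. if j = 0 then 1 else 0)"
  define x :: "nat \<Rightarrow> real" where "x = (\<lambda>j. y)"
  have e0: "ed 0 1 c x 0 = 0" by (simp add: ed_def hs_def c_def)
  have eS: "ed 0 1 c x (Suc u) = y ^ Suc u" for u
    using y by (simp add: ed_def hs_def c_def x_def)
  have s: "(\<lambda>u. ed 0 1 c x (Suc u)) sums (y / (1 - y))"
    unfolding eS using geo_suc y by blast
  then have sm: "summable (ed 0 1 c x)" using summable_Suc_iff sums_summable by blast
  have "suminf (ed 0 1 c x) = y / (1 - y)"
    using suminf_split_head[OF sm] s e0 sums_unique by fastforce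
  then show ?case using y sm by (intro exI[of _ c] exI[of _ x]) (auto simp: c_def x_def)
next
  case (Suc T)
  obtain c x where cx: "\<forall>j. 0 < x j \<and> x j < 1" "\<forall>j\<ge>Suc T. c j = 0"
    "summable (ed T (Suc T) c x)" "suminf (ed T (Suc T) c x) \<le> e / 2"
    using Suc.IH[of "e/2"] Suc.prems by auto
  define A where "A = (\<Sum>j<Suc T. c j / x j)"
  obtain y where y: "0 < y" "y < 1" "\<bar>A\<bar> * (y / (1 - y)) \<le> e / 2"
    using small_y[of "e/2" "\<bar>A\<bar>"] Suc.prems by auto
  define c' where "c' = (\<lambda>j. if j < Suc T then c j / x j else if j = Suc T then - A else 0)"
  define x' where "x' = (\<lambda>j. if j = Suc T then y else x j)"
  have hs': "hs (Suc (Suc T)) c' x' u = (\<Sum>j<Suc T. c j / x j * x j ^ u) - A * y ^ u" for u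
    by (simp add: hs_def c'_def x'_def)
  have e0: "ed (Suc T) (Suc (Suc T)) c' x' 0 = 0"
    unfolding ed_def hs' by (simp add: A_def)
  have hsS: "(\<Sum>j<Suc T. c j / x j * x j ^ Suc u) = hs (Suc T) c x u" for u
    unfolding hs_def
  proof (rule sum.cong[OF refl])
    fix j assume "j \<in> {..<Suc T}"
    have "x j \<noteq> 0" using cx(1) by (metis less_irrefl)
    then show "c j / x j * x j ^ Suc u = c j * x j ^ u" by simp
  qed
  have eS: "ed (Suc T) (Suc (Suc T)) c' x' (Suc u) \<le> ed T (Suc T) c x u + \<bar>A\<bar> * y ^ Suc u" for u
  proof -
    have "ed (Suc T) (Suc (Suc T)) c' x' (Suc u)
        = \<bar>((if u = T then 1 else 0) - hs (Suc T) c x u) + A * y ^ Suc u\<bar>"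
      unfolding ed_def hs' hsS by simp
    also have "\<dots> \<le> ed T (Suc T) c x u + \<bar>A * y ^ Suc u\<bar>"
      unfolding ed_def by (rule abs_triangle_ineq)
    also have "\<bar>A * y ^ Suc u\<bar> = \<bar>A\<bar> * y ^ Suc u" using y by (simp add: abs_mult)
    finally show ?thesis .
  qed
  have g: "(\<lambda>u. \<bar>A\<bar> * y ^ Suc u) sums (\<bar>A\<bar> * (y / (1 - y)))"
    by (rule sums_mult, rule geo_suc) (use y in auto)
  have sB: "summable (\<lambda>u. ed T (Suc T) c x u + \<bar>A\<bar> * y ^ Suc u)"
    using cx(3) g summable_add sums_summable by blast
  have nn: "0 \<le> ed (Suc T) (Suc (Suc T)) c' x' u" for u by (simp add: ed_def)
  have sS: "summable (\<lambda>u. ed (Suc T) (Suc (Suc T)) c' x' (Suc u))"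
    by (rule summable_comparison_test'[OF sB, of 0]) (use eS nn in auto)
  then have sm: "summable (ed (Suc T) (Suc (Suc T)) c' x')" using summable_Suc_iff by blast
  have "suminf (ed (Suc T) (Suc (Suc T)) c' x') = (\<Sum>u. ed (Suc T) (Suc (Suc T)) c' x' (Suc u))"
    using suminf_split_head[OF sm] e0 by simp
  also have "\<dots> \<le> (\<Sum>u. ed T (Suc T) c x u + \<bar>A\<bar> * y ^ Suc u)"
    by (rule suminf_le[OF _ sS sB]) (use eS in auto)
  also have "\<dots> = suminf (ed T (Suc T) c x) + \<bar>A\<bar> * (y / (1 - y))"
    using suminf_add[OF cx(3) sums_summable[OF g]] sums_unique[OF g] by simp
  also have "\<dots> \<le> e" using cx(4) y(3) by linarith
  finally have le: "suminf (ed (Suc T) (Suc (Suc T)) c' x') \<le> e" .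
  have "\<forall>j. 0 < x' j \<and> x' j < 1" using cx(1) y by (simp add: x'_def)
  moreover have "\<forall>j\<ge>Suc (Suc T). c' j = 0" by (simp add: c'_def)
  ultimately show ?case using sm le by blast
qed

lemma pow_bound:
  fixes T :: nat assumes "n \<ge> 1"
  shows "real T ^ n \<le> (100 * real n) ^ n * exp (0.01 * real T)"
proof -
  have np: "real n > 0" using assms by simp
  have e1: "100 * real n * (0.01 * real T / real n) = real T" using np by simp
  have "real T ^ n = (100 * real n * (0.01 * real T / real n)) ^ n" by (simp only: e1)
  also have "\<dots> = (100 * real n) ^ n * (0.01 * real T / real n) ^ n" by (rule power_mult_distrib)
  finally have a: "real T ^ n = (100 * real n) ^ n * (0.01 * real T / real n) ^ n" .
  have "(0.01 * real T / real n) ^ n \<le> (1 + 0.01 * real T / real n) ^ n"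
    by (rule power_mono) auto
  also have "\<dots> \<le> exp (0.01 * real T)"
    by (rule exp_ge_one_plus_x_over_n_power_n) (use assms in auto)
  finally have b: "(0.01 * real T / real n) ^ n \<le> exp (0.01 * real T)" .
  have "(100 * real n) ^ n * (0.01 * real T / real n) ^ n \<le> (100 * real n) ^ n * exp (0.01 * real T)"
    by (rule mult_left_mono[OF b]) simp
  then show ?thesis using a by simp
qed

lemma R1: fixes m :: nat and K :: real assumes "m \<ge> 1" "real m ^ n \<le> K" shows "1 \<le> K / real m ^ n"
proof -
  have "real m ^ n > 0" using assms by simp
  then show ?thesis using assms le_divide_eq_1_pos by blast
qed

theorem lemmaF2:
  fixes n :: nat
  assumes "n \<ge> 1"
  shows "\<exists>C::real. \<forall>(T::nat) (m::nat). m \<ge> 1 \<longrightarrow>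
           (\<exists>\<alpha> \<beta> :: nat \<Rightarrow> real. (\<forall>k\<in>{1..m}. \<beta> k > 0) \<and>
             (\<forall>B\<in>{1..T}.
                summable (\<lambda>t. \<bar>(if t = B then 1 else 0) - phi m \<alpha> \<beta> B t\<bar>) \<and>
                (\<Sum>t. \<bar>(if t = B then 1 else 0) - phi m \<alpha> \<beta> B t\<bar>)
                  \<le> C * exp (0.01 * real (n + 1) * real T) / real m ^ n))"
proof -
  define C :: real where "C = (100 * real n) ^ n"
  have Cpos: "C > 0" using assms by (simp add: C_def)
  show ?thesis
  proof (intro exI[of _ C] allI impI)
    fix T m :: nat assume m1: "m \<ge> 1"
    define R where "R = C * exp (0.01 * real (n + 1) * real T) / real m ^ n"
    have Rpos: "R > 0" using Cpos m1 by (simp add: R_def)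
    have "\<exists>\<alpha> \<beta> :: nat \<Rightarrow> real. (\<forall>k\<in>{1..m}. \<beta> k > 0) \<and>
             (\<forall>B\<in>{1..T}.
                summable (\<lambda>t. \<bar>(if t = B then 1 else 0) - phi m \<alpha> \<beta> B t\<bar>) \<and>
                (\<Sum>t. \<bar>(if t = B then 1 else 0) - phi m \<alpha> \<beta> B t\<bar>) \<le> R)"
    proof (cases "m \<le> T")
      case True
      have "real m ^ n \<le> real T ^ n" using True by (simp add: power_mono)
      also have "\<dots> \<le> C * exp (0.01 * real T)" using pow_bound[OF assms] by (simp add: C_def)
      also have "\<dots> \<le> C * exp (0.01 * real (n + 1) * real T)"
      proof -
        have "(0.01::real) * real T \<le> (0.01 * real (n + 1)) * real T"
          by (rule mult_right_mono) auto
        then show ?thesis using Cpos by simp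
      qed
      finally have R1: "1 \<le> R" unfolding R_def by (rule R1[OF m1])
      have ph: "phi m (\<lambda>k. 0) (\<lambda>k. 1) B t = 0" for B t by (simp add: phi_def)
      have eq: "(\<lambda>t. \<bar>(if t = B then 1 else 0) - phi m (\<lambda>k. 0) (\<lambda>k. 1) B t\<bar>)
          = (\<lambda>t. if t = B then (\<lambda>_. 1::real) t else 0)" for B
        by (auto simp: ph)
      have ss: "summable (\<lambda>t. if t = B then (\<lambda>_. 1::real) t else 0) \<and>
          (\<Sum>t. if t = B then (\<lambda>_. 1::real) t else 0) = 1" for B
        using sums_single[of B "\<lambda>_. 1::real"] unfolding sums_iff by blast
      show ?thesis
        apply (rule exI[of _ "\<lambda>k. 0"], rule exI[of _ "\<lambda>k. 1"])
        unfolding eq using ss R1 by simp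
    next
      case False
      then have mT: "Suc T \<le> m" by simp
      obtain c x where cx: "\<forall>j. 0 < x j \<and> x j < 1" "\<forall>j\<ge>Suc T. c j = 0"
        "summable (ed T (Suc T) c x)" "suminf (ed T (Suc T) c x) \<le> R"
        using core[OF Rpos, of T] by blast
      define \<alpha> where "\<alpha> = (\<lambda>k. c (k - 1) * x (k - 1) ^ T)"
      define \<beta> where "\<beta> = (\<lambda>k. - ln (x (k - 1)))"
      have bpos: "\<forall>k\<in>{1..m}. \<beta> k > 0" using cx(1) by (simp add: \<beta>_def)
      have main: "summable (\<lambda>t. \<bar>(if t = B then 1 else 0) - phi m \<alpha> \<beta> B t\<bar>) \<and>
                (\<Sum>t. \<bar>(if t = B then 1 else 0) - phi m \<alpha> \<beta> B t\<bar>) \<le> R"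
        if B: "B \<in> {1..T}" for B
      proof -
        define d where "d = T - B"
        have BT: "B \<le> T" using B by simp
        have trm: "\<alpha> (Suc j) * exp (- \<beta> (Suc j) * (real t - real B)) = c j * x j ^ (t + d)"
          for j t
        proof -
          have xp: "x j > 0" using cx(1) by blast
          have "exp (- \<beta> (Suc j) * (real t - real B)) = x j powr (real t - real B)"
            using xp by (simp add: \<beta>_def powr_def)
          then have "\<alpha> (Suc j) * exp (- \<beta> (Suc j) * (real t - real B))
              = c j * (x j powr real T * x j powr (real t - real B))"
            using xp by (simp add: \<alpha>_def powr_realpow)
          also have "x j powr real T * x j powr (real t - real B) = x j powr real (t + d)"
          proof -
            have "real T + (real t - real B) = real (t + d)" using BT by (simp add: d_def of_nat_diff)
            then show ?thesis by (simp only: powr_add[symmetric])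
          qed
          also have "\<dots> = x j ^ (t + d)" using xp powr_realpow[of "x j" "t + d"] by simp
          finally show ?thesis .
        qed
        have ph: "phi m \<alpha> \<beta> B t = hs (Suc T) c x (t + d)" for t
        proof -
          have "phi m \<alpha> \<beta> B t = (\<Sum>j<m. c j * x j ^ (t + d))"
          proof -
            have "phi m \<alpha> \<beta> B t = (\<Sum>k<m. \<alpha> (Suc k) * exp (- \<beta> (Suc k) * (real t - real B)))"
              unfolding phi_def
              using sum.atLeast1_atMost_eq[where g="\<lambda>k. \<alpha> k * exp (- \<beta> k * (real t - real B))" and n=m]
              by simp
            then show ?thesis by (simp only: trm)
          qed
          also have "\<dots> = (\<Sum>j<Suc T. c j * x j ^ (t + d))"
            by (rule sum.mono_neutral_right) (use mT cx(2) in auto)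
          finally show ?thesis by (simp add: hs_def)
        qed
        have eqf: "(\<lambda>t. \<bar>(if t = B then 1 else 0) - phi m \<alpha> \<beta> B t\<bar>) = (\<lambda>t. ed T (Suc T) c x (t + d))"
        proof
          fix t
          have "(t = B) = (t + d = T)" using BT by (auto simp: d_def)
          then show "\<bar>(if t = B then 1 else 0) - phi m \<alpha> \<beta> B t\<bar> = ed T (Suc T) c x (t + d)"
            by (simp only: ph ed_def)
        qed
        have s: "summable (\<lambda>t. ed T (Suc T) c x (t + d))" using cx(3) by simp
        have "(\<Sum>t. ed T (Suc T) c x (t + d)) = suminf (ed T (Suc T) c x) - (\<Sum>i<d. ed T (Suc T) c x i)"
          by (rule suminf_minus_initial_segment[OF cx(3)])
        also have "\<dots> \<le> suminf (ed T (Suc T) c x)"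
        proof -
          have "0 \<le> (\<Sum>i<d. ed T (Suc T) c x i)" by (rule sum_nonneg) (simp add: ed_def)
          then show ?thesis by linarith
        qed
        finally have "(\<Sum>t. ed T (Suc T) c x (t + d)) \<le> R" using cx(4) by linarith
        then show ?thesis unfolding eqf using s by blast
      qed
      show ?thesis using bpos main by blast
    qed
    then show "\<exists>\<alpha> \<beta> :: nat \<Rightarrow> real. (\<forall>k\<in>{1..m}. \<beta> k > 0) \<and>
             (\<forall>B\<in>{1..T}.
                summable (\<lambda>t. \<bar>(if t = B then 1 else 0) - phi m \<alpha> \<beta> B t\<bar>) \<and>
                (\<Sum>t. \<bar>(if t = B then 1 else 0) - phi m \<alpha> \<beta> B t\<bar>)
                  \<le> C * exp (0.01 * real (n + 1) * real T) / real m ^ n)"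
      unfolding R_def[symmetric] .
  qed
qed

end
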